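(* Let $X_1, X_2, \dots$ be i.i.d. random variables with $\mathbb{P}(X_1 = l) = p_l$ for $l \in \mathbb{Z}^+$. Fix integers $k \ge 1$, $0 \le j \le k$ and $i_0 \in \mathbb{Z}^+$. For $i \ge 1$ let $\xi_i$ be the indicator of the event that $X_{i+k} = i_0$ and exactly $j$ of $X_i, X_{i+1}, \dots, X_{i+k-1}$ are $\ge i_0$. Then: (1) for every $i \ge 1$, $\mathbb{E}(\xi_i) = \mathbb{P}(\xi_i = 1) = \binom{k}{j} S_{i_0}^j (1-S_{i_0})^{k-j} p_{i_0}$; (2) for every $i \ge 1$, $\mathbb{E}(\xi_i \xi_{i+1}) = \binom{k-1}{j-1} S_{i_0}^{j} (1-S_{i_0})^{k-j} p_{i_0}^2$; (3) for $i_1, i_2 \ge 1$ with $|i_1 - i_2| = m > k$, $\mathbb{P}(\xi_{i_1} = 1, \xi_{i_2} = 1) = \mathbb{P}(\xi_{i_1} = 1)\mathbb{P}(\xi_{i_2} = 1)$ and $\mathbb{E}(\xi_{i_1}\xi_{i_2}) = \mathbb{E}(\xi_{i_1})\mathbb{E}(\xi_{i_2})$; (4) for $i_1, i_2 \ge 1$ with $|i_1 - i_2| = m \in \{1, 2, \dots, k\}$, \[ \phi_m := \mathbb{E}(\xi_{i_1}\xi_{i_2}) = \sum_{t=\max\{0, j-m-1\}}^{\min\{k-m, j-1\}} \binom{m}{j-t}\binom{m-1}{j-t-1}\binom{k-m}{t} S_{i_0}^{2j-t-1} (1-S_{i_0})^{m-2j+t+k} p_{i_0}^2 . \]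
   Context: $S_{i_0} = \mathbb{P}(X_1 \ge i_0) = \sum_{s \ge i_0} p_s$. Binomial coefficients $\binom{a}{b}$ are taken to be $0$ when $b < 0$ or $b > a$, an empty sum is $0$, and $0^0 = 1$. *)

theory Defs
  imports "HOL-Probability.Probability"
begin

definition tailS :: "(nat \<Rightarrow> real) \<Rightarrow> nat \<Rightarrow> real" where
  "tailS p i0 = (\<Sum>s. p (s + i0))"

definition binom_int :: "int \<Rightarrow> int \<Rightarrow> real" where
  "binom_int a b = (if b < 0 \<or> a < 0 then 0 else real (nat a choose nat b))"

definition xi :: "(nat \<Rightarrow> 'a \<Rightarrow> nat) \<Rightarrow> nat \<Rightarrow> nat \<Rightarrow> nat \<Rightarrow> nat \<Rightarrow> 'a \<Rightarrow> real" where
  "xi X k j i0 i \<omega> =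
     (if X (i + k) \<omega> = i0 \<and> card {l \<in> {i..<i + k}. i0 \<le> X l \<omega>} = j then 1 else 0)"

end

theory Submission
  imports Defs
begin

context prob_space begin

lemma setsX:
  assumes indep: "indep_vars (\<lambda>_. count_space UNIV) X {1..}" and "l \<ge> 1"
  shows "{\<omega>\<in>space M. P (X l \<omega>)} \<in> sets M"
proof -
  have rv: "X l \<in> measurable M (count_space UNIV)" using indep assms(2) by (auto simp: indep_vars_def2)
  have "X l -` {x. P x} \<inter> space M \<in> sets M" by (rule measurable_sets[OF rv]) simp
  moreover have "X l -` {x. P x} \<inter> space M = {\<omega>\<in>space M. P (X l \<omega>)}" by auto
  ultimately show ?thesis by simp
qed

lemma tail_prob:
  assumes indep: "indep_vars (\<lambda>_. count_space UNIV) X {1..}"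
    and distr: "\<And>i l. i \<ge> 1 \<Longrightarrow> l \<ge> 1 \<Longrightarrow> prob {\<omega> \<in> space M. X i \<omega> = l} = p l"
    and "i0 \<ge> 1" and "l \<ge> 1"
  shows "prob {\<omega>\<in>space M. i0 \<le> X l \<omega>} = tailS p i0"
proof -
  let ?A = "\<lambda>s. {\<omega>\<in>space M. X l \<omega> = s + i0}"
  have "(\<lambda>s. prob (?A s)) sums prob (\<Union>s. ?A s)"
    by (rule finite_measure_UNION) (auto simp: disjoint_family_on_def intro: setsX[OF indep assms(4)])
  moreover have "(\<Union>s. ?A s) = {\<omega>\<in>space M. i0 \<le> X l \<omega>}"
    by auto (metis le_add_diff_inverse2)
  moreover have "prob (?A s) = p (s + i0)" for s using distr[OF assms(4)] assms(3) by simp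
  ultimately show ?thesis by (simp add: tailS_def sums_iff)
qed

lemma event_prob:
  assumes indep: "indep_vars (\<lambda>_. count_space UNIV) X {1..}"
    and distr: "\<And>i l. i \<ge> 1 \<Longrightarrow> l \<ge> 1 \<Longrightarrow> prob {\<omega> \<in> space M. X i \<omega> = l} = p l"
    and i0: "i0 \<ge> 1" and fU: "finite U" and fV: "finite V" and disj: "U \<inter> V = {}"
    and U1: "U \<subseteq> {1..}" and V1: "V \<subseteq> {1..}" and TT: "TT \<subseteq> Pow U"
  shows "{\<omega>\<in>space M. {l\<in>U. i0 \<le> X l \<omega>} \<in> TT \<and> (\<forall>v\<in>V. X v \<omega> = i0)} \<in> sets M"
    "prob {\<omega>\<in>space M. {l\<in>U. i0 \<le> X l \<omega>} \<in> TT \<and> (\<forall>v\<in>V. X v \<omega> = i0)}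
      = (\<Sum>T\<in>TT. tailS p i0 ^ card T * (1 - tailS p i0) ^ (card U - card T)) * p i0 ^ card V"
proof -
  define S where "S = tailS p i0"
  define E where "E T = {\<omega>\<in>space M. (\<forall>l\<in>U. (l\<in>T \<longleftrightarrow> i0 \<le> X l \<omega>)) \<and> (\<forall>v\<in>V. X v \<omega> = i0)}" for T
  have sx: "{\<omega>\<in>space M. P (X l \<omega>)} \<in> sets M" if "l \<in> U \<union> V" for l P
    using setsX[OF indep, of l] that U1 V1 by auto
  have Esets: "E T \<in> sets M" for T
  proof -
    have a: "{\<omega>\<in>space M. \<forall>l\<in>U. (l\<in>T \<longleftrightarrow> i0 \<le> X l \<omega>)} \<in> sets M"
    proof (cases "U = {}")
      case True then show ?thesis by simp
    next
      case False then show ?thesis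
        by (intro sets.sets_Collect_finite_All' fU) (auto intro: sx)
    qed
    have b: "{\<omega>\<in>space M. \<forall>v\<in>V. X v \<omega> = i0} \<in> sets M"
    proof (cases "V = {}")
      case True then show ?thesis by simp
    next
      case False then show ?thesis
        by (intro sets.sets_Collect_finite_All' fV) (auto intro: sx)
    qed
    have "E T = {\<omega>\<in>space M. \<forall>l\<in>U. (l\<in>T \<longleftrightarrow> i0 \<le> X l \<omega>)} \<inter> {\<omega>\<in>space M. \<forall>v\<in>V. X v \<omega> = i0}"
      unfolding E_def by auto
    then show ?thesis using a b by simp
  qed
  have ev: "{\<omega>\<in>space M. {l\<in>U. i0 \<le> X l \<omega>} \<in> TT \<and> (\<forall>v\<in>V. X v \<omega> = i0)} = (\<Union>T\<in>TT. E T)"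
  proof (intro equalityI subsetI)
    fix \<omega> assume "\<omega> \<in> {\<omega>\<in>space M. {l\<in>U. i0 \<le> X l \<omega>} \<in> TT \<and> (\<forall>v\<in>V. X v \<omega> = i0)}"
    then show "\<omega> \<in> (\<Union>T\<in>TT. E T)" unfolding E_def by (intro UN_I[of "{l\<in>U. i0 \<le> X l \<omega>}"]) auto
  next
    fix \<omega> assume "\<omega> \<in> (\<Union>T\<in>TT. E T)"
    then obtain T where T: "T \<in> TT" "\<omega> \<in> E T" by auto
    then have "T \<subseteq> U" using TT by auto
    with T have "{l\<in>U. i0 \<le> X l \<omega>} = T" unfolding E_def by auto
    with T show "\<omega> \<in> {\<omega>\<in>space M. {l\<in>U. i0 \<le> X l \<omega>} \<in> TT \<and> (\<forall>v\<in>V. X v \<omega> = i0)}"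
      unfolding E_def by auto
  qed
  show "{\<omega>\<in>space M. {l\<in>U. i0 \<le> X l \<omega>} \<in> TT \<and> (\<forall>v\<in>V. X v \<omega> = i0)} \<in> sets M"
    unfolding ev using TT fU by (intro sets.finite_UN) (auto intro: Esets finite_subset)
  have fTT: "finite TT" using TT fU by (auto intro: finite_subset)
  have dj: "disjoint_family_on E TT"
    unfolding disjoint_family_on_def
  proof (intro ballI impI)
    fix T T' assume "T \<in> TT" "T' \<in> TT" "T \<noteq> T'"
    then have "T \<subseteq> U" "T' \<subseteq> U" using TT by auto
    then show "E T \<inter> E T' = {}" using \<open>T \<noteq> T'\<close> unfolding E_def by auto
  qed
  have PE: "prob (E T) = S ^ card T * (1 - S) ^ (card U - card T) * p i0 ^ card V" if "T \<subseteq> U" for T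
  proof (cases "U \<union> V = {}")
    case True
    then have "E T = space M" unfolding E_def by auto
    then show ?thesis using True that by (simp add: prob_space)
  next
    case False
    define F where "F j = (if j \<in> T then {\<omega>\<in>space M. i0 \<le> X j \<omega>} else if j \<in> U then {\<omega>\<in>space M. X j \<omega> < i0}
       else {\<omega>\<in>space M. X j \<omega> = i0})" for j
    have ET: "E T = (\<Inter>j\<in>U \<union> V. F j)"
    proof (intro equalityI subsetI)
      fix \<omega> assume "\<omega> \<in> E T"
      then show "\<omega> \<in> (\<Inter>j\<in>U \<union> V. F j)" using that disj unfolding E_def F_def
        by (auto simp: not_le)
    next
      fix \<omega> assume w: "\<omega> \<in> (\<Inter>j\<in>U \<union> V. F j)"
      then have Fj: "\<omega> \<in> F j" if "j \<in> U \<union> V" for j using that by auto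
      obtain j0 where "j0 \<in> U \<union> V" using False by auto
      then have sp: "\<omega> \<in> space M" using Fj[of j0] unfolding F_def by (auto split: if_splits)
      have "\<forall>l\<in>U. (l\<in>T \<longleftrightarrow> i0 \<le> X l \<omega>)"
      proof
        fix l assume l: "l \<in> U"
        show "l\<in>T \<longleftrightarrow> i0 \<le> X l \<omega>" using Fj[of l] l unfolding F_def by (auto split: if_splits)
      qed
      moreover have "\<forall>v\<in>V. X v \<omega> = i0"
      proof
        fix v assume v: "v \<in> V"
        then have "v \<notin> U" "v \<notin> T" using disj that by auto
        then show "X v \<omega> = i0" using Fj[of v] v unfolding F_def by auto
      qed
      ultimately show "\<omega> \<in> E T" using sp unfolding E_def by auto
    qed
    have iS: "indep_sets (\<lambda>i. { X i -` A \<inter> space M | A. A \<in> sets (count_space UNIV)}) {1..}"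
      using indep by (auto simp: indep_vars_def2)
    have "prob (\<Inter>j\<in>U \<union> V. F j) = (\<Prod>j\<in>U \<union> V. prob (F j))"
    proof (rule indep_setsD[OF iS])
      show "\<forall>j\<in>U \<union> V. F j \<in> {X j -` A \<inter> space M |A. A \<in> sets (count_space UNIV)}"
      proof
        fix j assume "j \<in> U \<union> V"
        define A where "A = (if j\<in>T then {x. i0\<le>x} else if j\<in>U then {x. x<i0} else {i0})"
        have "F j = X j -` A \<inter> space M" by (auto simp: F_def A_def)
        then show "F j \<in> {X j -` A \<inter> space M |A. A \<in> sets (count_space UNIV)}" by auto
      qed
    qed (use False U1 V1 fU fV in auto)
    also have "\<dots> = (\<Prod>j\<in>T. prob (F j)) * (\<Prod>j\<in>U - T. prob (F j)) * (\<Prod>j\<in>V. prob (F j))"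
    proof -
      have "U \<union> V = (T \<union> (U - T)) \<union> V" using that by auto
      then show ?thesis using fU fV that disj
        by (simp add: prod.union_disjoint finite_subset Int_Un_distrib2 Diff_Int_distrib2 del: Un_Diff_cancel)
           (metis (no_types, lifting) Diff_disjoint Diff_partition finite_Diff finite_subset prod.union_disjoint)
    qed
    also have "\<dots> = S ^ card T * (1 - S) ^ (card U - card T) * p i0 ^ card V"
    proof -
      have "(\<Prod>j\<in>T. prob (F j)) = (\<Prod>j\<in>T. S)"
        using that U1 by (intro prod.cong) (auto simp: F_def S_def intro!: tail_prob[OF indep distr i0])
      moreover have "(\<Prod>j\<in>U - T. prob (F j)) = (\<Prod>j\<in>U - T. 1 - S)"
      proof (intro prod.cong refl)
        fix j assume j: "j \<in> U - T"
        then have j1: "j \<ge> 1" using U1 by auto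
        have "F j = space M - {\<omega>\<in>space M. i0 \<le> X j \<omega>}" using j by (auto simp: F_def)
        then show "prob (F j) = 1 - S"
          using prob_compl[OF setsX[OF indep j1]] tail_prob[OF indep distr i0 j1] by (simp add: S_def)
      qed
      moreover have "(\<Prod>j\<in>V. prob (F j)) = (\<Prod>j\<in>V. p i0)"
        using that V1 disj i0 by (intro prod.cong) (auto simp: F_def intro!: distr)
      ultimately show ?thesis using that fU by (simp add: card_Diff_subset finite_subset)
    qed
    finally show ?thesis using ET by simp
  qed
  have "prob (\<Union>T\<in>TT. E T) = (\<Sum>T\<in>TT. prob (E T))"
    using fTT dj by (intro finite_measure_finite_Union) (auto intro: Esets)
  also have "\<dots> = (\<Sum>T\<in>TT. S ^ card T * (1 - S) ^ (card U - card T) * p i0 ^ card V)"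
    using TT by (intro sum.cong) (auto intro!: PE)
  finally show "prob {\<omega>\<in>space M. {l\<in>U. i0 \<le> X l \<omega>} \<in> TT \<and> (\<forall>v\<in>V. X v \<omega> = i0)}
      = (\<Sum>T\<in>TT. tailS p i0 ^ card T * (1 - tailS p i0) ^ (card U - card T)) * p i0 ^ card V"
    unfolding ev S_def by (simp add: sum_distrib_right)
qed

end

lemma count3:
  assumes fA: "finite A" and fQ: "finite Q" and fB: "finite B"
    and d1: "A \<inter> Q = {}" and d2: "A \<inter> B = {}" and d3: "Q \<inter> B = {}"
  shows "card {T. T \<subseteq> A \<union> Q \<union> B \<and> card (T \<inter> A) = a \<and> card (T \<inter> Q) = b \<and> card (T \<inter> B) = c}
    = (card A choose a) * (card Q choose b) * (card B choose c)"
proof -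
  let ?PA = "{X. X \<subseteq> A \<and> card X = a}" and ?PQ = "{X. X \<subseteq> Q \<and> card X = b}"
    and ?PB = "{X. X \<subseteq> B \<and> card X = c}"
  let ?P = "?PA \<times> (?PQ \<times> ?PB)"
  let ?f = "\<lambda>(X, Y, Z). X \<union> Y \<union> Z"
  have inj: "inj_on ?f ?P"
  proof (rule inj_onI)
    fix x y assume x: "x \<in> ?P" and y: "y \<in> ?P" and e: "?f x = ?f y"
    obtain X1 Y1 Z1 where x1: "x = (X1, Y1, Z1)" by (cases x) auto
    obtain X2 Y2 Z2 where y2: "y = (X2, Y2, Z2)" by (cases y) auto
    have e': "X1 \<union> Y1 \<union> Z1 = X2 \<union> Y2 \<union> Z2" using e x1 y2 by simp
    have s: "X1 \<subseteq> A" "Y1 \<subseteq> Q" "Z1 \<subseteq> B" "X2 \<subseteq> A" "Y2 \<subseteq> Q" "Z2 \<subseteq> B" using x y x1 y2 by auto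
    have "X1 = (X1 \<union> Y1 \<union> Z1) \<inter> A" "X2 = (X2 \<union> Y2 \<union> Z2) \<inter> A" using s d1 d2 d3 by auto
    moreover have "Y1 = (X1 \<union> Y1 \<union> Z1) \<inter> Q" "Y2 = (X2 \<union> Y2 \<union> Z2) \<inter> Q" using s d1 d2 d3 by auto
    moreover have "Z1 = (X1 \<union> Y1 \<union> Z1) \<inter> B" "Z2 = (X2 \<union> Y2 \<union> Z2) \<inter> B" using s d1 d2 d3 by auto
    ultimately show "x = y" using e' x1 y2 by metis
  qed
  have img: "?f ` ?P = {T. T \<subseteq> A \<union> Q \<union> B \<and> card (T \<inter> A) = a \<and> card (T \<inter> Q) = b \<and> card (T \<inter> B) = c}"
  proof (intro equalityI subsetI)
    fix T assume "T \<in> ?f ` ?P"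
    then obtain X Y Z where T: "T = X \<union> Y \<union> Z" "X \<subseteq> A" "Y \<subseteq> Q" "Z \<subseteq> B" "card X = a" "card Y = b" "card Z = c"
      by auto
    have "T \<inter> A = X" "T \<inter> Q = Y" "T \<inter> B = Z" using T d1 d2 d3 by auto
    then show "T \<in> {T. T \<subseteq> A \<union> Q \<union> B \<and> card (T \<inter> A) = a \<and> card (T \<inter> Q) = b \<and> card (T \<inter> B) = c}"
      using T by auto
  next
    fix T assume T: "T \<in> {T. T \<subseteq> A \<union> Q \<union> B \<and> card (T \<inter> A) = a \<and> card (T \<inter> Q) = b \<and> card (T \<inter> B) = c}"
    then have "T = ?f (T \<inter> A, T \<inter> Q, T \<inter> B)" by auto
    moreover have "(T \<inter> A, T \<inter> Q, T \<inter> B) \<in> ?P" using T by auto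
    ultimately show "T \<in> ?f ` ?P" by blast
  qed
  have "card (?f ` ?P) = card ?P" using inj by (rule card_image)
  also have "\<dots> = card ?PA * (card ?PQ * card ?PB)" by (simp add: card_cartesian_product)
  also have "\<dots> = (card A choose a) * (card Q choose b) * (card B choose c)"
    using fA fQ fB by (simp add: n_subsets)
  finally show ?thesis using img by simp
qed

lemma count2:
  assumes fA: "finite A" and fQ: "finite Q" and d1: "A \<inter> Q = {}"
  shows "card {T. T \<subseteq> A \<union> Q \<and> card (T \<inter> A) = a \<and> card (T \<inter> Q) = b}
    = (card A choose a) * (card Q choose b)"
  using count3[OF fA fQ finite.emptyI d1, of a b 0] by simp

lemma card_Int_Un2:
  assumes "finite A" "finite Q" "A \<inter> Q = {}"
  shows "card (T \<inter> (A \<union> Q)) = card (T \<inter> A) + card (T \<inter> Q)"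
proof -
  have "T \<inter> (A \<union> Q) = (T \<inter> A) \<union> (T \<inter> Q)" by auto
  then show ?thesis using assms by (simp add: card_Un_disjoint disjoint_iff)
qed

definition cc :: "nat \<Rightarrow> nat \<Rightarrow> nat \<Rightarrow> nat \<Rightarrow> nat" where
  "cc k j m t = (if t < j then (m choose (j - t)) * ((k - m) choose t) * ((m - 1) choose (j - t - 1)) else 0)"

context prob_space begin

lemma expect_ind:
  assumes "{\<omega>\<in>space M. P \<omega>} \<in> sets M" and "\<And>\<omega>. \<omega> \<in> space M \<Longrightarrow> f \<omega> = (if P \<omega> then 1 else 0)"
  shows "expectation f = prob {\<omega>\<in>space M. P \<omega>}"
proof -
  have "expectation f = expectation (indicator {\<omega>\<in>space M. P \<omega>})"
    using assms(2) by (intro Bochner_Integration.integral_cong) (auto simp: indicator_def)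
  also have "\<dots> = prob ({\<omega>\<in>space M. P \<omega>} \<inter> space M)" by simp
  also have "{\<omega>\<in>space M. P \<omega>} \<inter> space M = {\<omega>\<in>space M. P \<omega>}" by blast
  finally show ?thesis .
qed

context
  fixes X :: "nat \<Rightarrow> 'a \<Rightarrow> nat" and p :: "nat \<Rightarrow> real" and k j i0 :: nat
  assumes indep: "indep_vars (\<lambda>_. count_space UNIV) X {1..}"
    and distr: "\<And>i l. i \<ge> 1 \<Longrightarrow> l \<ge> 1 \<Longrightarrow> prob {\<omega> \<in> space M. X i \<omega> = l} = p l"
    and k1: "k \<ge> 1" and jk: "j \<le> k" and i01: "i0 \<ge> 1"
begin

lemma part1:
  assumes a: "a \<ge> 1"
  shows "{\<omega>\<in>space M. xi X k j i0 a \<omega> = 1} \<in> sets M"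
    "prob {\<omega>\<in>space M. xi X k j i0 a \<omega> = 1} = real (k choose j) * tailS p i0 ^ j * (1 - tailS p i0) ^ (k - j) * p i0"
proof -
  define TT where "TT = {T. T \<subseteq> {a..<a+k} \<and> card T = j}"
  have ev: "{\<omega>\<in>space M. xi X k j i0 a \<omega> = 1} = {\<omega>\<in>space M. {l\<in>{a..<a+k}. i0 \<le> X l \<omega>} \<in> TT \<and> (\<forall>v\<in>{a+k}. X v \<omega> = i0)}"
    by (auto simp: xi_def TT_def)
  note E = event_prob[OF indep distr i01, of "{a..<a+k}" "{a+k}" TT]
  show "{\<omega>\<in>space M. xi X k j i0 a \<omega> = 1} \<in> sets M" unfolding ev using a by (intro E(1)) (auto simp: TT_def)
  have "prob {\<omega>\<in>space M. xi X k j i0 a \<omega> = 1} = (\<Sum>T\<in>TT. tailS p i0 ^ card T * (1 - tailS p i0) ^ (card {a..<a+k} - card T)) * p i0 ^ card {a+k}"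
    unfolding ev using a by (intro E(2)) (auto simp: TT_def)
  also have "\<dots> = (\<Sum>T\<in>TT. tailS p i0 ^ j * (1 - tailS p i0) ^ (k - j)) * p i0"
    by (simp add: TT_def)
  also have "\<dots> = real (k choose j) * tailS p i0 ^ j * (1 - tailS p i0) ^ (k - j) * p i0"
    by (simp add: TT_def n_subsets)
  finally show "prob {\<omega>\<in>space M. xi X k j i0 a \<omega> = 1} = real (k choose j) * tailS p i0 ^ j * (1 - tailS p i0) ^ (k - j) * p i0" .
qed

lemma part_far:
  assumes a: "a \<ge> 1" and b: "b = a + m" and m: "m > k"
  shows "{\<omega>\<in>space M. xi X k j i0 a \<omega> = 1 \<and> xi X k j i0 b \<omega> = 1} \<in> sets M"
    "prob {\<omega>\<in>space M. xi X k j i0 a \<omega> = 1 \<and> xi X k j i0 b \<omega> = 1}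
      = (real (k choose j) * tailS p i0 ^ j * (1 - tailS p i0) ^ (k - j) * p i0)^2"
proof -
  define W1 where "W1 = {a..<a+k}"
  define W2 where "W2 = {b..<b+k}"
  define TT where "TT = {T. T \<subseteq> W1 \<union> W2 \<and> card (T \<inter> W1) = j \<and> card (T \<inter> W2) = j}"
  have d: "W1 \<inter> W2 = {}" using b m by (auto simp: W1_def W2_def)
  have ev: "{\<omega>\<in>space M. xi X k j i0 a \<omega> = 1 \<and> xi X k j i0 b \<omega> = 1}
     = {\<omega>\<in>space M. {l\<in>W1 \<union> W2. i0 \<le> X l \<omega>} \<in> TT \<and> (\<forall>v\<in>{a+k, b+k}. X v \<omega> = i0)}"
  proof -
    have "(xi X k j i0 a \<omega> = 1 \<and> xi X k j i0 b \<omega> = 1) \<longleftrightarrow>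
       ({l\<in>W1 \<union> W2. i0 \<le> X l \<omega>} \<in> TT \<and> (\<forall>v\<in>{a+k, b+k}. X v \<omega> = i0))" for \<omega>
    proof -
      define T0 where "T0 = {l\<in>W1 \<union> W2. i0 \<le> X l \<omega>}"
      define C1 where "C1 = {l\<in>W1. i0 \<le> X l \<omega>}"
      define C2 where "C2 = {l\<in>W2. i0 \<le> X l \<omega>}"
      have h1: "T0 \<inter> W1 = C1" unfolding T0_def C1_def by auto
      have h2: "T0 \<inter> W2 = C2" unfolding T0_def C2_def by auto
      have h3: "T0 \<subseteq> W1 \<union> W2" unfolding T0_def by auto
      have xa: "xi X k j i0 a \<omega> = (if X (a+k) \<omega> = i0 \<and> card C1 = j then 1 else 0)"
        unfolding xi_def C1_def W1_def by simp
      have xb: "xi X k j i0 b \<omega> = (if X (b+k) \<omega> = i0 \<and> card C2 = j then 1 else 0)"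
        unfolding xi_def C2_def W2_def by simp
      have "T0 \<in> TT \<longleftrightarrow> card C1 = j \<and> card C2 = j" unfolding TT_def using h1 h2 h3 by simp
      then show ?thesis unfolding T0_def[symmetric] xa xb by auto
    qed
    then show ?thesis by blast
  qed
  have UV: "(W1 \<union> W2) \<inter> {a+k, b+k} = {}" using b m by (auto simp: W1_def W2_def)
  note E = event_prob[OF indep distr i01, of "W1 \<union> W2" "{a+k, b+k}" TT]
  show "{\<omega>\<in>space M. xi X k j i0 a \<omega> = 1 \<and> xi X k j i0 b \<omega> = 1} \<in> sets M"
    unfolding ev using a b UV by (intro E(1)) (auto simp: TT_def W1_def W2_def)
  have cU: "card (W1 \<union> W2) = 2 * k" using d by (simp add: card_Un_disjoint W1_def W2_def)
  have cV: "card {a+k, b+k} = 2" using b m by simp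
  have cT: "card T = 2 * j" if "T \<in> TT" for T
  proof -
    have "T = T \<inter> (W1 \<union> W2)" using that by (auto simp: TT_def)
    then have "card T = card (T \<inter> W1) + card (T \<inter> W2)"
      using card_Int_Un2[of W1 W2 T] d by (simp add: W1_def W2_def)
    then show ?thesis using that by (simp add: TT_def)
  qed
  have cTT: "card TT = (k choose j) * (k choose j)"
    unfolding TT_def using count2[of W1 W2 j j] d by (simp add: W1_def W2_def)
  have "prob {\<omega>\<in>space M. xi X k j i0 a \<omega> = 1 \<and> xi X k j i0 b \<omega> = 1}
     = (\<Sum>T\<in>TT. tailS p i0 ^ card T * (1 - tailS p i0) ^ (card (W1 \<union> W2) - card T)) * p i0 ^ card {a+k, b+k}"
    unfolding ev using a b UV by (intro E(2)) (auto simp: TT_def W1_def W2_def)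
  also have "\<dots> = (\<Sum>T\<in>TT. tailS p i0 ^ (2*j) * (1 - tailS p i0) ^ (2*k - 2*j)) * p i0 ^ 2"
    unfolding cU cV by (intro arg_cong2[where f="(*)"] sum.cong refl) (simp_all add: cT)
  also have "\<dots> = real (card TT) * tailS p i0 ^ (2*j) * (1 - tailS p i0) ^ (2*k - 2*j) * p i0 ^ 2"
    by simp
  also have "\<dots> = (real (k choose j) * tailS p i0 ^ j * (1 - tailS p i0) ^ (k - j) * p i0)^2"
  proof -
    have e1: "2*k - 2*j = (k - j) + (k - j)" using jk by simp
    have e2: "2*j = j + j" by simp
    show ?thesis unfolding cTT e1 unfolding e2 power_add by (simp add: power2_eq_square)
  qed
  finally show "prob {\<omega>\<in>space M. xi X k j i0 a \<omega> = 1 \<and> xi X k j i0 b \<omega> = 1}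
      = (real (k choose j) * tailS p i0 ^ j * (1 - tailS p i0) ^ (k - j) * p i0)^2" .
qed

end
end

context prob_space begin
context
  fixes X :: "nat \<Rightarrow> 'a \<Rightarrow> nat" and p :: "nat \<Rightarrow> real" and k j i0 :: nat
  assumes indep: "indep_vars (\<lambda>_. count_space UNIV) X {1..}"
    and distr: "\<And>i l. i \<ge> 1 \<Longrightarrow> l \<ge> 1 \<Longrightarrow> prob {\<omega> \<in> space M. X i \<omega> = l} = p l"
    and k1: "k \<ge> 1" and jk: "j \<le> k" and i01: "i0 \<ge> 1"
begin

lemma part_near:
  assumes a: "a \<ge> 1" and m1: "1 \<le> m" and mk: "m \<le> k"
  shows "{\<omega>\<in>space M. xi X k j i0 a \<omega> = 1 \<and> xi X k j i0 (a + m) \<omega> = 1} \<in> sets M"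
    "prob {\<omega>\<in>space M. xi X k j i0 a \<omega> = 1 \<and> xi X k j i0 (a + m) \<omega> = 1}
      = (\<Sum>t\<in>{0..k-m}. real (cc k j m t) * tailS p i0 ^ (2*j-t-1) * (1 - tailS p i0) ^ (k+m-1-(2*j-t-1))) * p i0 ^ 2"
proof -
  define A where "A = {a..<a+m}"
  define Q where "Q = {a+m..<a+k}"
  define B where "B = {a+k+1..<a+k+m}"
  define U where "U = A \<union> Q \<union> B"
  define V where "V = {a+k, a+m+k}"
  define TT where "TT = {T. T \<subseteq> U \<and> card (T \<inter> (A \<union> Q)) = j \<and> card (T \<inter> (Q \<union> B)) + 1 = j}"
  have fin: "finite A" "finite Q" "finite B" by (simp_all add: A_def Q_def B_def)
  have dAQ: "A \<inter> Q = {}" and dAB: "A \<inter> B = {}" and dQB: "Q \<inter> B = {}"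
    unfolding A_def Q_def B_def using mk by auto
  have cA: "card A = m" and cQ: "card Q = k - m" and cB: "card B = m - 1"
    unfolding A_def Q_def B_def using mk by auto
  have W1: "{a..<a+k} = A \<union> Q" unfolding A_def Q_def using mk by auto
  have W2: "{a+m..<a+m+k} = insert (a+k) (Q \<union> B)" unfolding Q_def B_def using mk m1 by auto
  have akn: "a+k \<notin> Q \<union> B" unfolding Q_def B_def by auto
  have UV: "U \<inter> V = {}" unfolding U_def V_def A_def Q_def B_def using mk m1 by auto
  have U1: "U \<subseteq> {1..}" unfolding U_def A_def Q_def B_def using a by auto
  have V1: "V \<subseteq> {1..}" unfolding V_def using a by auto
  have ev: "{\<omega>\<in>space M. xi X k j i0 a \<omega> = 1 \<and> xi X k j i0 (a + m) \<omega> = 1}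
     = {\<omega>\<in>space M. {l\<in>U. i0 \<le> X l \<omega>} \<in> TT \<and> (\<forall>v\<in>V. X v \<omega> = i0)}"
  proof -
    have "(xi X k j i0 a \<omega> = 1 \<and> xi X k j i0 (a + m) \<omega> = 1) \<longleftrightarrow>
       ({l\<in>U. i0 \<le> X l \<omega>} \<in> TT \<and> (\<forall>v\<in>V. X v \<omega> = i0))" for \<omega>
    proof -
      define T0 where "T0 = {l\<in>U. i0 \<le> X l \<omega>}"
      define C1 where "C1 = {l\<in>A \<union> Q. i0 \<le> X l \<omega>}"
      define C2 where "C2 = {l\<in>Q \<union> B. i0 \<le> X l \<omega>}"
      have h1: "T0 \<inter> (A \<union> Q) = C1" unfolding T0_def C1_def U_def by auto
      have h2: "T0 \<inter> (Q \<union> B) = C2" unfolding T0_def C2_def U_def by auto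
      have h3: "T0 \<subseteq> U" unfolding T0_def by auto
      have xa: "xi X k j i0 a \<omega> = (if X (a+k) \<omega> = i0 \<and> card C1 = j then 1 else 0)"
        unfolding xi_def C1_def W1 by simp
      have xb0: "xi X k j i0 (a+m) \<omega> = (if X (a+m+k) \<omega> = i0 \<and> card {l\<in>{a+m..<a+m+k}. i0 \<le> X l \<omega>} = j then 1 else 0)"
        unfolding xi_def by (simp add: add.assoc)
      have c2: "card {l\<in>{a+m..<a+m+k}. i0 \<le> X l \<omega>} = card C2 + 1" if "X (a+k) \<omega> = i0"
      proof -
        have "{l\<in>{a+m..<a+m+k}. i0 \<le> X l \<omega>} = insert (a+k) C2"
          unfolding W2 C2_def using that by auto
        moreover have "a+k \<notin> C2" using akn unfolding C2_def by auto
        moreover have "finite C2" unfolding C2_def using fin by auto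
        ultimately show ?thesis by simp
      qed
      have "T0 \<in> TT \<longleftrightarrow> card C1 = j \<and> card C2 + 1 = j" unfolding TT_def using h1 h2 h3 by simp
      then show ?thesis unfolding T0_def[symmetric] xa xb0 V_def
        using c2 by (cases "X (a+k) \<omega> = i0") auto
    qed
    then show ?thesis by blast
  qed
  note E = event_prob[OF indep distr i01 _ _ UV U1 V1, of TT]
  have fU: "finite U" "finite V" unfolding U_def V_def using fin by auto
  have TTp: "TT \<subseteq> Pow U" unfolding TT_def by auto
  show "{\<omega>\<in>space M. xi X k j i0 a \<omega> = 1 \<and> xi X k j i0 (a + m) \<omega> = 1} \<in> sets M"
    unfolding ev using E(1) fU TTp by blast
  have cU: "card U = k + m - 1" unfolding U_def using fin dAQ dAB dQB cA cQ cB mk m1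
    by (simp add: card_Un_disjoint Int_Un_distrib2)
  have cV: "card V = 2" unfolding V_def using m1 by simp
  have dec: "card T = card (T \<inter> A) + card (T \<inter> Q) + card (T \<inter> B)"
     "card (T \<inter> (A \<union> Q)) = card (T \<inter> A) + card (T \<inter> Q)"
     "card (T \<inter> (Q \<union> B)) = card (T \<inter> Q) + card (T \<inter> B)" if "T \<subseteq> U" for T
  proof -
    show "card (T \<inter> (A \<union> Q)) = card (T \<inter> A) + card (T \<inter> Q)" by (rule card_Int_Un2[OF fin(1,2) dAQ])
    show "card (T \<inter> (Q \<union> B)) = card (T \<inter> Q) + card (T \<inter> B)" by (rule card_Int_Un2[OF fin(2,3) dQB])
    have "T = T \<inter> ((A \<union> Q) \<union> B)" using that unfolding U_def by auto
    then have "card T = card (T \<inter> (A \<union> Q)) + card (T \<inter> B)"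
      using card_Int_Un2[of "A \<union> Q" B T] fin dAB dQB by (metis Int_Un_distrib2 Un_empty finite_UnI)
    then show "card T = card (T \<inter> A) + card (T \<inter> Q) + card (T \<inter> B)"
      using card_Int_Un2[OF fin(1,2) dAQ, of T] by simp
  qed
  let ?S = "tailS p i0"
  let ?f = "\<lambda>T. ?S ^ card T * (1 - ?S) ^ (card U - card T)"
  have "prob {\<omega>\<in>space M. xi X k j i0 a \<omega> = 1 \<and> xi X k j i0 (a + m) \<omega> = 1}
     = (\<Sum>T\<in>TT. ?f T) * p i0 ^ card V"
    unfolding ev using E(2) fU TTp by blast
  also have "(\<Sum>T\<in>TT. ?f T) = (\<Sum>t\<in>{0..k-m}. \<Sum>T\<in>{T. T \<in> TT \<and> card (T \<inter> Q) = t}. ?f T)"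
  proof (rule sum.group[symmetric])
    show "finite TT" using TTp fU by (auto intro: finite_subset)
    show "(\<lambda>T. card (T \<inter> Q)) ` TT \<subseteq> {0..k - m}"
    proof
      fix x assume "x \<in> (\<lambda>T. card (T \<inter> Q)) ` TT"
      then obtain T where "x = card (T \<inter> Q)" by auto
      moreover have "card (T \<inter> Q) \<le> card Q" using fin by (intro card_mono) auto
      ultimately show "x \<in> {0..k - m}" using cQ by simp
    qed
  qed simp
  also have "\<dots> = (\<Sum>t\<in>{0..k-m}. real (cc k j m t) * ?S ^ (2*j-t-1) * (1 - ?S) ^ (k+m-1-(2*j-t-1)))"
  proof (intro sum.cong refl)
    fix t assume t: "t \<in> {0..k-m}"
    show "(\<Sum>T\<in>{T. T \<in> TT \<and> card (T \<inter> Q) = t}. ?f T) = real (cc k j m t) * ?S ^ (2*j-t-1) * (1 - ?S) ^ (k+m-1-(2*j-t-1))"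
    proof (cases "t < j")
      case True
      have eqs: "{T. T \<in> TT \<and> card (T \<inter> Q) = t} = {T. T \<subseteq> A \<union> Q \<union> B \<and> card (T \<inter> A) = j - t \<and> card (T \<inter> Q) = t \<and> card (T \<inter> B) = j - t - 1}"
      proof (intro equalityI subsetI)
        fix T assume "T \<in> {T. T \<in> TT \<and> card (T \<inter> Q) = t}"
        then have T: "T \<subseteq> U" "card (T \<inter> (A \<union> Q)) = j" "card (T \<inter> (Q \<union> B)) + 1 = j" "card (T \<inter> Q) = t"
          unfolding TT_def by auto
        then show "T \<in> {T. T \<subseteq> A \<union> Q \<union> B \<and> card (T \<inter> A) = j - t \<and> card (T \<inter> Q) = t \<and> card (T \<inter> B) = j - t - 1}"
          using dec[OF T(1)] unfolding U_def by auto
      next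
        fix T assume "T \<in> {T. T \<subseteq> A \<union> Q \<union> B \<and> card (T \<inter> A) = j - t \<and> card (T \<inter> Q) = t \<and> card (T \<inter> B) = j - t - 1}"
        then have T: "T \<subseteq> U" "card (T \<inter> A) = j - t" "card (T \<inter> Q) = t" "card (T \<inter> B) = j - t - 1"
          unfolding U_def by auto
        then show "T \<in> {T. T \<in> TT \<and> card (T \<inter> Q) = t}"
          using dec[OF T(1)] True unfolding TT_def by auto
      qed
      have cT: "card T = 2*j-t-1" if "T \<in> {T. T \<in> TT \<and> card (T \<inter> Q) = t}" for T
      proof -
        have "T \<subseteq> U" "card (T \<inter> A) = j - t" "card (T \<inter> Q) = t" "card (T \<inter> B) = j - t - 1"
          using that unfolding eqs U_def by auto
        then show ?thesis using dec(1)[of T] True by simp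
      qed
      have "(\<Sum>T\<in>{T. T \<in> TT \<and> card (T \<inter> Q) = t}. ?f T)
          = (\<Sum>T\<in>{T. T \<in> TT \<and> card (T \<inter> Q) = t}. ?S ^ (2*j-t-1) * (1 - ?S) ^ (k+m-1-(2*j-t-1)))"
      proof (rule sum.cong[OF refl])
        fix T assume "T \<in> {T. T \<in> TT \<and> card (T \<inter> Q) = t}"
        then have "card T = 2*j-t-1" by (rule cT)
        then show "?f T = ?S ^ (2*j-t-1) * (1 - ?S) ^ (k+m-1-(2*j-t-1))" unfolding cU by simp
      qed
      also have "\<dots> = real (card {T. T \<in> TT \<and> card (T \<inter> Q) = t}) * ?S ^ (2*j-t-1) * (1 - ?S) ^ (k+m-1-(2*j-t-1))"
        by simp
      also have "card {T. T \<in> TT \<and> card (T \<inter> Q) = t} = cc k j m t"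
        unfolding eqs count3[OF fin dAQ dAB dQB] cc_def cA cQ cB using True by simp
      finally show ?thesis .
    next
      case False
      have "{T. T \<in> TT \<and> card (T \<inter> Q) = t} = {}"
      proof (rule ccontr)
        assume "{T. T \<in> TT \<and> card (T \<inter> Q) = t} \<noteq> {}"
        then obtain T where T: "T \<subseteq> U" "card (T \<inter> (Q \<union> B)) + 1 = j" "card (T \<inter> Q) = t"
          unfolding TT_def by auto
        then show False using dec(3)[OF T(1)] False by simp
      qed
      then show ?thesis using False by (simp only: sum.empty) (simp add: cc_def)
    qed
  qed
  finally show "prob {\<omega>\<in>space M. xi X k j i0 a \<omega> = 1 \<and> xi X k j i0 (a + m) \<omega> = 1}
      = (\<Sum>t\<in>{0..k-m}. real (cc k j m t) * tailS p i0 ^ (2*j-t-1) * (1 - tailS p i0) ^ (k+m-1-(2*j-t-1))) * p i0 ^ 2"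
    unfolding cV .
qed

end
end

lemma conv:
  fixes S P :: real
  assumes m1: "1 \<le> m" and mk: "m \<le> k" and jk: "j \<le> k"
  shows "(\<Sum>t\<in>{0..k-m}. real (cc k j m t) * S ^ (2*j-t-1) * (1 - S) ^ (k+m-1-(2*j-t-1))) * P ^ 2
    = (\<Sum>t\<in>{max 0 (int j - int m - 1) .. min (int k - int m) (int j - 1)}.
                 binom_int (int m) (int j - t) * binom_int (int m - 1) (int j - t - 1)
                 * binom_int (int k - int m) t
                 * S powi (2 * int j - t - 1) * (1 - S) powi (int m - 2 * int j + t + int k)
                 * P ^ 2)"
proof -
  define F where "F t = binom_int (int m) (int j - t) * binom_int (int m - 1) (int j - t - 1)
                 * binom_int (int k - int m) t
                 * S powi (2 * int j - t - 1) * (1 - S) powi (int m - 2 * int j + t + int k)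
                 * P ^ 2" for t
  have "(\<Sum>t\<in>{max 0 (int j - int m - 1) .. min (int k - int m) (int j - 1)}. F t)
      = (\<Sum>t\<in>{0..int (k-m)}. F t)"
  proof (rule sum.mono_neutral_left)
    show "{max 0 (int j - int m - 1)..min (int k - int m) (int j - 1)} \<subseteq> {0..int (k - m)}"
      using mk by auto
    show "\<forall>t\<in>{0..int (k - m)} - {max 0 (int j - int m - 1)..min (int k - int m) (int j - 1)}. F t = 0"
    proof
      fix t assume t: "t \<in> {0..int (k - m)} - {max 0 (int j - int m - 1)..min (int k - int m) (int j - 1)}"
      then have "t < int j - int m - 1 \<or> t > int j - 1" using mk by auto
      then show "F t = 0"
      proof
        assume "t < int j - int m - 1"
        then have "nat (int j - t) > m" by linarith
        then show "F t = 0" unfolding F_def binom_int_def by simp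
      next
        assume "t > int j - 1"
        then show "F t = 0" unfolding F_def binom_int_def by simp
      qed
    qed
  qed simp
  also have "\<dots> = (\<Sum>t\<in>{0..k-m}. F (int t))"
    unfolding image_int_atLeastAtMost[symmetric, of 0 "k-m", simplified]
    by (subst sum.reindex) (auto simp: inj_on_def)
  also have "\<dots> = (\<Sum>t\<in>{0..k-m}. real (cc k j m t) * S ^ (2*j-t-1) * (1 - S) ^ (k+m-1-(2*j-t-1)) * P ^ 2)"
  proof (intro sum.cong refl)
    fix t assume t: "t \<in> {0..k-m}"
    show "F (int t) = real (cc k j m t) * S ^ (2*j-t-1) * (1 - S) ^ (k+m-1-(2*j-t-1)) * P ^ 2"
    proof (cases "t < j")
      case False
      then show ?thesis unfolding F_def binom_int_def cc_def by simp
    next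
      case True
      show ?thesis
      proof (cases "j - t > m")
        case True
        then have "nat (int j - int t) > m" by linarith
        then have z: "m choose nat (int j - int t) = 0" "m choose (j - t) = 0" using True by (simp_all add: binomial_eq_0)
        show ?thesis unfolding F_def binom_int_def cc_def by (simp add: z)
      next
        case False
        have e1: "2 * int j - int t - 1 = int (2*j-t-1)" using \<open>t < j\<close> by linarith
        have ineq: "2*j \<le> k+m+t" using False jk by linarith
        have e2: "int m - 2 * int j + int t + int k = int (k+m-1-(2*j-t-1))" using \<open>t < j\<close> ineq m1
          by (simp add: of_nat_diff)
        have e3: "nat (int j - int t) = j - t" "nat (int j - int t - 1) = j - t - 1"
          "nat (int m - 1) = m - 1" "nat (int k - int m) = k - m" using \<open>t < j\<close> m1 mk by auto
        show ?thesis unfolding F_def binom_int_def cc_def e1 e2 power_int_of_nat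
          using \<open>t < j\<close> m1 mk e3 by simp
      qed
    qed
  qed
  finally show ?thesis unfolding F_def by (simp add: sum_distrib_right)
qed

lemma conv2:
  fixes S P :: real
  assumes k1: "1 \<le> k" and jk: "j \<le> k"
  shows "(\<Sum>t\<in>{0..k-1}. real (cc k j 1 t) * S ^ (2*j-t-1) * (1 - S) ^ (k+1-1-(2*j-t-1))) * P ^ 2
    = binom_int (int k - 1) (int j - 1) * S ^ j * (1 - S) ^ (k - j) * P ^ 2"
proof -
  have "(\<Sum>t\<in>{0..k-1}. real (cc k j 1 t) * S ^ (2*j-t-1) * (1 - S) ^ (k+1-1-(2*j-t-1)))
     = (\<Sum>t\<in>{0..k-1}. if t = j - 1 \<and> 1 \<le> j then real ((k-1) choose (j-1)) * S ^ j * (1 - S) ^ (k - j) else 0)"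
  proof (intro sum.cong refl)
    fix t assume t: "t \<in> {0..k-1}"
    show "real (cc k j 1 t) * S ^ (2*j-t-1) * (1 - S) ^ (k+1-1-(2*j-t-1))
      = (if t = j - 1 \<and> 1 \<le> j then real ((k-1) choose (j-1)) * S ^ j * (1 - S) ^ (k - j) else 0)"
    proof (cases "t = j - 1 \<and> 1 \<le> j")
      case True
      then have "2*j-t-1 = j" "k+1-1-(2*j-t-1) = k - j" "t < j" "j - t = 1" by auto
      then show ?thesis using True by (simp add: cc_def)
    next
      case False
      then have "t \<ge> j \<or> j - t \<ge> 2" by auto
      then have c0: "cc k j 1 t = 0" unfolding cc_def by (auto simp: binomial_eq_0)
      show ?thesis unfolding if_not_P[OF False] c0 by simp
    qed
  qed
  also have "\<dots> = (if 1 \<le> j then real ((k-1) choose (j-1)) * S ^ j * (1 - S) ^ (k - j) else 0)"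
    using jk by (simp add: sum.delta' conj_commute) linarith
  also have "\<dots> = binom_int (int k - 1) (int j - 1) * S ^ j * (1 - S) ^ (k - j)"
  proof (cases "1 \<le> j")
    case True
    then have "nat (int k - 1) = k - 1" "nat (int j - 1) = j - 1" using k1 by auto
    then show ?thesis using True k1 unfolding binom_int_def by simp
  next
    case False
    then show ?thesis unfolding binom_int_def by simp
  qed
  finally show ?thesis by simp
qed

theorem theorem4:
  fixes M :: "'a measure" and X :: "nat \<Rightarrow> 'a \<Rightarrow> nat" and p :: "nat \<Rightarrow> real"
    and k j i0 :: nat
  assumes "prob_space M"
    and indep: "prob_space.indep_vars M (\<lambda>_. count_space UNIV) X {1..}"
    and pos: "\<And>i. i \<ge> 1 \<Longrightarrow> AE \<omega> in M. X i \<omega> \<ge> 1"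
    and distr: "\<And>i l. i \<ge> 1 \<Longrightarrow> l \<ge> 1 \<Longrightarrow> measure M {\<omega> \<in> space M. X i \<omega> = l} = p l"
    and "k \<ge> 1" and "j \<le> k" and "i0 \<ge> 1"
  defines "S \<equiv> tailS p i0"
  shows
    "(\<forall>i\<ge>1. prob_space.expectation M (xi X k j i0 i)
              = measure M {\<omega> \<in> space M. xi X k j i0 i \<omega> = 1}
           \<and> measure M {\<omega> \<in> space M. xi X k j i0 i \<omega> = 1}
              = real (k choose j) * S ^ j * (1 - S) ^ (k - j) * p i0)
   \<and> (\<forall>i\<ge>1. prob_space.expectation M (\<lambda>\<omega>. xi X k j i0 i \<omega> * xi X k j i0 (i + 1) \<omega>)
              = binom_int (int k - 1) (int j - 1) * S ^ j * (1 - S) ^ (k - j) * p i0 ^ 2)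
   \<and> (\<forall>i1 i2 m. i1 \<ge> 1 \<longrightarrow> i2 \<ge> 1 \<longrightarrow> \<bar>int i1 - int i2\<bar> = int m \<longrightarrow> m > k \<longrightarrow>
          measure M {\<omega> \<in> space M. xi X k j i0 i1 \<omega> = 1 \<and> xi X k j i0 i2 \<omega> = 1}
            = measure M {\<omega> \<in> space M. xi X k j i0 i1 \<omega> = 1}
              * measure M {\<omega> \<in> space M. xi X k j i0 i2 \<omega> = 1}
        \<and> prob_space.expectation M (\<lambda>\<omega>. xi X k j i0 i1 \<omega> * xi X k j i0 i2 \<omega>)
            = prob_space.expectation M (xi X k j i0 i1) * prob_space.expectation M (xi X k j i0 i2))
   \<and> (\<forall>i1 i2 m. i1 \<ge> 1 \<longrightarrow> i2 \<ge> 1 \<longrightarrow> \<bar>int i1 - int i2\<bar> = int m \<longrightarrow> 1 \<le> m \<longrightarrow> m \<le> k \<longrightarrow>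
          prob_space.expectation M (\<lambda>\<omega>. xi X k j i0 i1 \<omega> * xi X k j i0 i2 \<omega>)
            = (\<Sum>t\<in>{max 0 (int j - int m - 1) .. min (int k - int m) (int j - 1)}.
                 binom_int (int m) (int j - t) * binom_int (int m - 1) (int j - t - 1)
                 * binom_int (int k - int m) t
                 * S powi (2 * int j - t - 1) * (1 - S) powi (int m - 2 * int j + t + int k)
                 * p i0 ^ 2))"
proof -
  interpret prob_space M by fact
  note k1 = \<open>k \<ge> 1\<close> and jk = \<open>j \<le> k\<close> and i01 = \<open>i0 \<ge> 1\<close>
  have P1: "{\<omega>\<in>space M. xi X k j i0 a \<omega> = 1} \<in> sets M"
    "prob {\<omega>\<in>space M. xi X k j i0 a \<omega> = 1} = real (k choose j) * tailS p i0 ^ j * (1 - tailS p i0) ^ (k - j) * p i0"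
    if "a \<ge> 1" for a
    by (rule part1[where p=p, OF indep _ k1 jk i01 that]; simp add: distr)+
  have Pfar: "{\<omega>\<in>space M. xi X k j i0 a \<omega> = 1 \<and> xi X k j i0 b \<omega> = 1} \<in> sets M"
    "prob {\<omega>\<in>space M. xi X k j i0 a \<omega> = 1 \<and> xi X k j i0 b \<omega> = 1}
      = (real (k choose j) * tailS p i0 ^ j * (1 - tailS p i0) ^ (k - j) * p i0)^2"
    if "a \<ge> 1" "b = a + m" "m > k" for a b m
    by (rule part_far[where p=p, OF indep _ k1 jk i01 that]; simp add: distr)+
  have Pnear: "{\<omega>\<in>space M. xi X k j i0 a \<omega> = 1 \<and> xi X k j i0 (a + m) \<omega> = 1} \<in> sets M"
    "prob {\<omega>\<in>space M. xi X k j i0 a \<omega> = 1 \<and> xi X k j i0 (a + m) \<omega> = 1}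
      = (\<Sum>t\<in>{0..k-m}. real (cc k j m t) * tailS p i0 ^ (2*j-t-1) * (1 - tailS p i0) ^ (k+m-1-(2*j-t-1))) * p i0 ^ 2"
    if "a \<ge> 1" "1 \<le> m" "m \<le> k" for a m
    by (rule part_near[where p=p, OF indep _ k1 jk i01 that]; simp add: distr)+
  have xi01: "xi X k j i0 a \<omega> = (if xi X k j i0 a \<omega> = 1 then 1 else 0)" for a \<omega>
    unfolding xi_def by simp
  have E1: "expectation (xi X k j i0 a) = prob {\<omega>\<in>space M. xi X k j i0 a \<omega> = 1}" if "a \<ge> 1" for a
    by (rule expect_ind[OF P1(1)[OF that]]) (rule xi01)
  have E2: "expectation (\<lambda>\<omega>. xi X k j i0 a \<omega> * xi X k j i0 b \<omega>) = prob {\<omega>\<in>space M. xi X k j i0 a \<omega> = 1 \<and> xi X k j i0 b \<omega> = 1}"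
    if "{\<omega>\<in>space M. xi X k j i0 a \<omega> = 1 \<and> xi X k j i0 b \<omega> = 1} \<in> sets M" for a b
    by (rule expect_ind[OF that]) (simp add: xi_def)
  have comm: "(\<lambda>\<omega>. xi X k j i0 a \<omega> * xi X k j i0 b \<omega>) = (\<lambda>\<omega>. xi X k j i0 b \<omega> * xi X k j i0 a \<omega>)" for a b
    by (simp add: mult.commute)
  have commS: "{\<omega>\<in>space M. xi X k j i0 a \<omega> = 1 \<and> xi X k j i0 b \<omega> = 1} = {\<omega>\<in>space M. xi X k j i0 b \<omega> = 1 \<and> xi X k j i0 a \<omega> = 1}" for a b
    by auto
  have R1: "\<forall>i\<ge>1. expectation (xi X k j i0 i) = prob {\<omega> \<in> space M. xi X k j i0 i \<omega> = 1}
           \<and> prob {\<omega> \<in> space M. xi X k j i0 i \<omega> = 1} = real (k choose j) * S ^ j * (1 - S) ^ (k - j) * p i0"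
    using E1 P1(2) unfolding S_def by blast
  have R2: "\<forall>i\<ge>1. expectation (\<lambda>\<omega>. xi X k j i0 i \<omega> * xi X k j i0 (i + 1) \<omega>)
              = binom_int (int k - 1) (int j - 1) * S ^ j * (1 - S) ^ (k - j) * p i0 ^ 2"
  proof (intro allI impI)
    fix i :: nat assume i: "i \<ge> 1"
    show "expectation (\<lambda>\<omega>. xi X k j i0 i \<omega> * xi X k j i0 (i + 1) \<omega>)
              = binom_int (int k - 1) (int j - 1) * S ^ j * (1 - S) ^ (k - j) * p i0 ^ 2"
      unfolding E2[OF Pnear(1)[OF i order.refl k1]] Pnear(2)[OF i order.refl k1] S_def
      by (rule conv2[OF k1 jk])
  qed
  have R3: "\<forall>i1 i2 m. i1 \<ge> 1 \<longrightarrow> i2 \<ge> 1 \<longrightarrow> \<bar>int i1 - int i2\<bar> = int m \<longrightarrow> m > k \<longrightarrow>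
          prob {\<omega> \<in> space M. xi X k j i0 i1 \<omega> = 1 \<and> xi X k j i0 i2 \<omega> = 1}
            = prob {\<omega> \<in> space M. xi X k j i0 i1 \<omega> = 1} * prob {\<omega> \<in> space M. xi X k j i0 i2 \<omega> = 1}
        \<and> expectation (\<lambda>\<omega>. xi X k j i0 i1 \<omega> * xi X k j i0 i2 \<omega>)
            = expectation (xi X k j i0 i1) * expectation (xi X k j i0 i2)"
  proof (intro allI impI)
    fix i1 i2 m :: nat assume i1: "i1 \<ge> 1" and i2: "i2 \<ge> 1" and d: "\<bar>int i1 - int i2\<bar> = int m" and m: "m > k"
    have cs: "i2 = i1 + m \<or> i1 = i2 + m" using d by linarith
    have sets: "{\<omega> \<in> space M. xi X k j i0 i1 \<omega> = 1 \<and> xi X k j i0 i2 \<omega> = 1} \<in> sets M"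
      using cs
    proof
      assume h: "i2 = i1 + m"
      show "{\<omega> \<in> space M. xi X k j i0 i1 \<omega> = 1 \<and> xi X k j i0 i2 \<omega> = 1} \<in> sets M" by (rule Pfar(1)[OF i1 h m])
    next
      assume h: "i1 = i2 + m"
      show "{\<omega> \<in> space M. xi X k j i0 i1 \<omega> = 1 \<and> xi X k j i0 i2 \<omega> = 1} \<in> sets M" unfolding commS[of i1 i2] by (rule Pfar(1)[OF i2 h m])
    qed
    have pr: "prob {\<omega> \<in> space M. xi X k j i0 i1 \<omega> = 1 \<and> xi X k j i0 i2 \<omega> = 1}
        = (real (k choose j) * tailS p i0 ^ j * (1 - tailS p i0) ^ (k - j) * p i0)^2"
      using cs
    proof
      assume h: "i2 = i1 + m"
      show "prob {\<omega> \<in> space M. xi X k j i0 i1 \<omega> = 1 \<and> xi X k j i0 i2 \<omega> = 1}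
        = (real (k choose j) * tailS p i0 ^ j * (1 - tailS p i0) ^ (k - j) * p i0)^2" by (rule Pfar(2)[OF i1 h m])
    next
      assume h: "i1 = i2 + m"
      show "prob {\<omega> \<in> space M. xi X k j i0 i1 \<omega> = 1 \<and> xi X k j i0 i2 \<omega> = 1}
        = (real (k choose j) * tailS p i0 ^ j * (1 - tailS p i0) ^ (k - j) * p i0)^2" unfolding commS[of i1 i2] by (rule Pfar(2)[OF i2 h m])
    qed
    have pp: "prob {\<omega> \<in> space M. xi X k j i0 i1 \<omega> = 1 \<and> xi X k j i0 i2 \<omega> = 1}
            = prob {\<omega> \<in> space M. xi X k j i0 i1 \<omega> = 1} * prob {\<omega> \<in> space M. xi X k j i0 i2 \<omega> = 1}"
      unfolding pr P1(2)[OF i1] P1(2)[OF i2] by (simp add: power2_eq_square)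
    then show "prob {\<omega> \<in> space M. xi X k j i0 i1 \<omega> = 1 \<and> xi X k j i0 i2 \<omega> = 1}
            = prob {\<omega> \<in> space M. xi X k j i0 i1 \<omega> = 1} * prob {\<omega> \<in> space M. xi X k j i0 i2 \<omega> = 1}
        \<and> expectation (\<lambda>\<omega>. xi X k j i0 i1 \<omega> * xi X k j i0 i2 \<omega>)
            = expectation (xi X k j i0 i1) * expectation (xi X k j i0 i2)"
      unfolding E2[OF sets] E1[OF i1] E1[OF i2] by simp
  qed
  have R4: "\<forall>i1 i2 m. i1 \<ge> 1 \<longrightarrow> i2 \<ge> 1 \<longrightarrow> \<bar>int i1 - int i2\<bar> = int m \<longrightarrow> 1 \<le> m \<longrightarrow> m \<le> k \<longrightarrow>
          expectation (\<lambda>\<omega>. xi X k j i0 i1 \<omega> * xi X k j i0 i2 \<omega>)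
            = (\<Sum>t\<in>{max 0 (int j - int m - 1) .. min (int k - int m) (int j - 1)}.
                 binom_int (int m) (int j - t) * binom_int (int m - 1) (int j - t - 1)
                 * binom_int (int k - int m) t
                 * S powi (2 * int j - t - 1) * (1 - S) powi (int m - 2 * int j + t + int k)
                 * p i0 ^ 2)"
  proof (intro allI impI)
    fix i1 i2 m :: nat assume i1: "i1 \<ge> 1" and i2: "i2 \<ge> 1" and d: "\<bar>int i1 - int i2\<bar> = int m"
      and m1: "1 \<le> m" and mk: "m \<le> k"
    have key: "expectation (\<lambda>\<omega>. xi X k j i0 a \<omega> * xi X k j i0 (a + m) \<omega>)
      = (\<Sum>t\<in>{0..k-m}. real (cc k j m t) * tailS p i0 ^ (2*j-t-1) * (1 - tailS p i0) ^ (k+m-1-(2*j-t-1))) * p i0 ^ 2"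
      if a: "a \<ge> 1" for a
      unfolding E2[OF Pnear(1)[OF a m1 mk]] Pnear(2)[OF a m1 mk] ..
    have "i2 = i1 + m \<or> i1 = i2 + m" using d by linarith
    then have "expectation (\<lambda>\<omega>. xi X k j i0 i1 \<omega> * xi X k j i0 i2 \<omega>)
      = (\<Sum>t\<in>{0..k-m}. real (cc k j m t) * tailS p i0 ^ (2*j-t-1) * (1 - tailS p i0) ^ (k+m-1-(2*j-t-1))) * p i0 ^ 2"
    proof
      assume "i2 = i1 + m"
      then show ?thesis using key[OF i1] by simp
    next
      assume h: "i1 = i2 + m"
      show ?thesis unfolding h by (subst comm) (rule key[OF i2])
    qed
    then show "expectation (\<lambda>\<omega>. xi X k j i0 i1 \<omega> * xi X k j i0 i2 \<omega>)
            = (\<Sum>t\<in>{max 0 (int j - int m - 1) .. min (int k - int m) (int j - 1)}.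
                 binom_int (int m) (int j - t) * binom_int (int m - 1) (int j - t - 1)
                 * binom_int (int k - int m) t
                 * S powi (2 * int j - t - 1) * (1 - S) powi (int m - 2 * int j + t + int k)
                 * p i0 ^ 2)"
      unfolding S_def conv[OF m1 mk jk] .
  qed
  show ?thesis using R1 R2 R3 R4 by blast
qed

end
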